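(* Let $k\ge 0$ be an integer and let $f_k(x)\in\mathbb{Q}[x]$ be a monic polynomial of degree $k+1$ such that for all integers $g>3k$, \[\#\{S\in\mathcal{S}_g\mid m(S)=g-k\}=\frac{1}{(k+1)!}f_k(g).\] Then $f_k(x)$ has integer coefficients.
   Context: A numerical semigroup $S$ is a submonoid of $\mathbb{N}_0$ with finite complement; its genus is the size of the complement and $m(S)$ its smallest nonzero element. $\mathcal{S}_g$ is the set of numerical semigroups of genus $g$. (It is known that for each $k\ge0$ such a monic polynomial $f_k$ of degree $k+1$ exists.) *)

theory Defs
  imports Main "HOL-Computational_Algebra.Polynomial"
begin

definition numerical_semigroup :: "nat set \<Rightarrow> bool" where
  "numerical_semigroup S \<longleftrightarrow> 0 \<in> S \<and> (\<forall>a\<in>S. \<forall>b\<in>S. a + b \<in> S) \<and> finite (UNIV - S)"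

definition genus :: "nat set \<Rightarrow> nat" where
  "genus S = card (UNIV - S)"

definition multiplicity_ns :: "nat set \<Rightarrow> nat" where
  "multiplicity_ns S = (LEAST x. x \<in> S \<and> 0 < x)"

definition semigroups_of_genus :: "nat \<Rightarrow> nat set set" where
  "semigroups_of_genus g = {S. numerical_semigroup S \<and> genus S = g}"

end

theory Submission
  imports Defs
begin

definition intpoly :: "rat poly \<Rightarrow> bool" where
  "intpoly p \<longleftrightarrow> (\<forall>i. coeff p i \<in> \<int>)"

lemma intpoly_add: "intpoly p \<Longrightarrow> intpoly q \<Longrightarrow> intpoly (p + q)"
  by (simp add: intpoly_def Ints_add)

lemma intpoly_smult: "c \<in> \<int> \<Longrightarrow> intpoly p \<Longrightarrow> intpoly (smult c p)"
  by (simp add: intpoly_def Ints_mult)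

lemma intpoly_mult: "intpoly p \<Longrightarrow> intpoly q \<Longrightarrow> intpoly (p * q)"
  by (auto simp: intpoly_def coeff_mult intro!: Ints_sum Ints_mult)

lemma intpoly_lin: "c \<in> \<int> \<Longrightarrow> intpoly [:c, 1:]"
  by (auto simp: intpoly_def coeff_pCons split: nat.split)

lemma intpoly_one: "intpoly 1"
  by (auto simp: intpoly_def coeff_1)

lemma intpoly_prod: "(\<forall>i\<in>A. intpoly (p i)) \<Longrightarrow> intpoly (prod p A)"
  by (induction A rule: infinite_finite_induct) (auto simp: intpoly_one intpoly_mult)

lemma intpoly_poly: "intpoly p \<Longrightarrow> x \<in> \<int> \<Longrightarrow> poly p x \<in> \<int>"
  by (auto simp: poly_altdef intpoly_def intro!: Ints_sum Ints_mult Ints_power)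

definition Q :: "nat \<Rightarrow> nat \<Rightarrow> rat poly" where
  "Q k N = (\<Prod>i<k. [:- of_nat (N+i), 1:])"

lemma Q_Suc: "Q (Suc k) N = Q k N * [:- of_nat (N+k), 1:]"
  by (simp add: Q_def)

lemma Q_monic: "degree (Q k N) = k \<and> lead_coeff (Q k N) = 1"
proof (induction k)
  case 0
  then show ?case by (simp add: Q_def)
next
  case (Suc k)
  then have nz: "Q k N \<noteq> 0" by auto
  have l1: "degree [:- of_nat (N+k), 1:] = (1::nat)" by simp
  have l2: "lead_coeff [:- (of_nat (N+k)::rat), 1:] = 1" by simp
  have l3: "[:- (of_nat (N+k)::rat), 1:] \<noteq> 0" by simp
  show ?case unfolding Q_Suc
    using Suc nz degree_mult_eq[OF nz l3] lead_coeff_mult[of "Q k N" "[:- (of_nat (N+k)::rat), 1:]"] l1 l2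
    by (metis One_nat_def add_Suc_right add_0_right mult_1_right)
qed

lemma intpoly_Q: "intpoly (Q k N)"
  unfolding Q_def by (rule intpoly_prod) (auto intro!: intpoly_lin)

lemma poly_Q: "poly (Q k N) x = (\<Prod>i<k. x - of_nat (N+i))"
  unfolding Q_def poly_prod by (simp add: algebra_simps)

lemma poly_Q_Suc: "poly (Q (Suc k) N) x = poly (Q k N) x * (x - of_nat (N+k))"
  unfolding poly_Q by simp

lemma Q_zero: "i < k \<Longrightarrow> poly (Q k N) (of_nat (N+i)) = 0"
  unfolding poly_Q by (rule prod_zero) auto

lemma Q_val: "k \<le> M \<Longrightarrow> poly (Q k N) (of_nat (N+M)) = fact M / fact (M-k)"
proof (induction k)
  case 0
  then show ?case by (simp add: Q_def)
next
  case (Suc k)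
  have e: "M - k = Suc (M - Suc k)" using Suc.prems by arith
  have f: "(fact (M-k) :: rat) = of_nat (M-k) * fact (M - Suc k)"
    unfolding e fact_Suc by simp
  have d: "(of_nat (N+M) :: rat) - of_nat (N+k) = of_nat (M-k)"
    using Suc.prems by (simp add: of_nat_diff)
  have nz: "(of_nat (M-k) :: rat) \<noteq> 0" using Suc.prems by simp
  have "poly (Q (Suc k) N) (of_nat (N+M)) = fact M / fact (M-k) * of_nat (M-k)"
    using Suc by (simp only: poly_Q_Suc d)
  also have "\<dots> = fact M / fact (M - Suc k)"
    unfolding f using nz by (simp add: field_simps)
  finally show ?case .
qed

lemma Q_int: "N \<le> m \<Longrightarrow> poly (Q k N) (of_nat m) / fact k \<in> \<int>"
proof (cases "m < N + k")
  case True
  assume "N \<le> m"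
  then have "m = N + (m - N)" by simp
  then have "poly (Q k N) (of_nat m) = 0" using True Q_zero[of "m - N" k N] by simp
  then show ?thesis by simp
next
  case False
  assume "N \<le> m"
  then have m: "m = N + (m - N)" by simp
  have kle: "k \<le> m - N" using False by simp
  have "poly (Q k N) (of_nat m) / fact k = fact (m-N) / fact (m-N-k) / fact k"
    using Q_val[OF kle, of N] m by metis
  also have "\<dots> = (fact k * of_nat ((m-N) choose k)) / fact k"
    using fact_binomial[OF kle] by (metis diff_diff_left)
  also have "\<dots> = of_nat ((m-N) choose k)"
    by simp
  finally show ?thesis by simp
qed

lemma main:
  fixes p :: "rat poly"
  shows "degree p \<le> n \<Longrightarrow> (\<forall>i\<le>n. poly p (of_nat (N+i)) \<in> \<int>) \<Longrightarrow>
    intpoly (smult (fact n) p) \<and> (\<forall>m\<ge>N. poly p (of_nat m) \<in> \<int>)"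
proof (induction n arbitrary: p)
  case 0
  have pc: "\<And>x. poly p x = coeff p 0" using 0 by (simp add: poly_altdef)
  have c: "coeff p 0 \<in> \<int>" using 0(2) pc by auto
  have "intpoly p" unfolding intpoly_def
  proof
    fix i show "coeff p i \<in> \<int>"
      using c 0(1) coeff_eq_0[of p i] by (cases i) auto
  qed
  then show ?case using pc c by simp
next
  case (Suc n)
  define a where "a = coeff p (Suc n)"
  define r where "r = p - smult a (Q (Suc n) N)"
  have QS: "degree (Q (Suc n) N) = Suc n" "coeff (Q (Suc n) N) (Suc n) = 1"
    using Q_monic[of "Suc n" N] by auto
  have degr: "degree r \<le> n"
  proof (rule degree_le, intro allI impI)
    fix i assume "n < i"
    show "coeff r i = 0"
    proof (cases "i = Suc n")
      case True
      then show ?thesis using QS by (simp add: r_def a_def)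
    next
      case False
      then have "i > Suc n" using \<open>n < i\<close> by simp
      then show ?thesis using QS Suc.prems(1) coeff_eq_0[of p i] coeff_eq_0[of "Q (Suc n) N" i]
        by (simp add: r_def)
    qed
  qed
  have rv: "\<forall>i\<le>n. poly r (of_nat (N+i)) \<in> \<int>"
    using Suc.prems(2) Q_zero[of _ "Suc n" N] by (simp add: r_def)
  from Suc.IH[OF degr rv] have IH1: "intpoly (smult (fact n) r)"
    and IH2: "\<forall>m\<ge>N. poly r (of_nat m) \<in> \<int>" by auto
  define b where "b = fact (Suc n) * a"
  have pr: "p = r + smult a (Q (Suc n) N)" by (simp add: r_def)
  have "poly p (of_nat (N + Suc n)) = poly r (of_nat (N + Suc n)) + b"
    using Q_val[of "Suc n" "Suc n" N] by (subst pr) (simp add: b_def)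
  then have "b = poly p (of_nat (N + Suc n)) - poly r (of_nat (N + Suc n))" by simp
  moreover have "poly p (of_nat (N + Suc n)) \<in> \<int>" using Suc.prems(2) by blast
  moreover have "poly r (of_nat (N + Suc n)) \<in> \<int>" using IH2 le_add1 by blast
  ultimately have bI: "b \<in> \<int>" by (metis Ints_diff)
  have vals: "\<forall>m\<ge>N. poly p (of_nat m) \<in> \<int>"
  proof (intro allI impI)
    fix m assume "N \<le> m"
    have "poly p (of_nat m) = poly r (of_nat m) + b * (poly (Q (Suc n) N) (of_nat m) / fact (Suc n))"
      by (subst pr) (simp add: b_def)
    moreover have "poly r (of_nat m) \<in> \<int>" using IH2 \<open>N \<le> m\<close> by blast
    moreover have "b * (poly (Q (Suc n) N) (of_nat m) / fact (Suc n)) \<in> \<int>"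
      using bI Q_int[OF \<open>N \<le> m\<close>, of "Suc n"] by (rule Ints_mult)
    ultimately show "poly p (of_nat m) \<in> \<int>" by (metis Ints_add)
  qed
  have "smult (fact (Suc n)) p = smult (of_nat (Suc n)) (smult (fact n) r) + smult b (Q (Suc n) N)"
    by (subst pr) (simp add: b_def smult_add_right fact_Suc)
  moreover have "intpoly (smult (of_nat (Suc n)) (smult (fact n) r) + smult b (Q (Suc n) N))"
    by (intro intpoly_add intpoly_smult IH1 bI intpoly_Q) simp
  ultimately show ?case using vals by simp
qed

theorem corollary1p11:
  fixes k :: nat and f :: "rat poly"
  assumes monic: "lead_coeff f = 1"
    and deg: "degree f = k + 1"
    and count: "\<And>g::nat. g > 3 * k \<Longrightarrow>
       of_nat (card {S \<in> semigroups_of_genus g. multiplicity_ns S = g - k})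
         = poly f (of_nat g) / fact (k + 1)"
  shows "\<forall>i. coeff f i \<in> \<int>"
proof -
  define h where "h = smult (1 / fact (k+1)) f"
  have dh: "degree h \<le> k + 1" using deg degree_smult_le[of _ f] by (simp add: h_def)
  have hv: "\<forall>i\<le>k+1. poly h (of_nat (Suc (3*k) + i)) \<in> \<int>"
  proof (intro allI impI)
    fix i :: nat
    have "poly h (of_nat (Suc (3*k) + i)) = poly f (of_nat (Suc (3*k) + i)) / fact (k+1)"
      by (simp add: h_def)
    also have "\<dots> = of_nat (card {S \<in> semigroups_of_genus (Suc (3*k) + i).
         multiplicity_ns S = (Suc (3*k) + i) - k})"
      using count[of "Suc (3*k) + i"] by simp
    finally show "poly h (of_nat (Suc (3*k) + i)) \<in> \<int>" by simp
  qed
  have "intpoly (smult (fact (k+1)) h)" using main[OF dh hv] by simp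
  moreover have "smult (fact (k+1)) h = f" by (simp add: h_def)
  ultimately show ?thesis by (metis intpoly_def)
qed

end
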